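(* In the purely diffusive, time-homogeneous case with $r=0$, for every $n\le N$ the solution $G^n$ of the $n$-th Cauchy problem has the form $$G^n(t,x;T,y)=\sum_{\substack{0\le i\le n,\ 0\le j\le n(n+3),\ 0\le k\le n(n+5)/2\\ i+j-k\ge n}}c^n_{i,j,k}\,(x-\bar x)^i\big(\sqrt{T-t}\big)^j\,\partial_x^kG^0(t,x;T,y),$$ where the $c^n_{i,j,k}$ are polynomial functions of $\alpha_0,\alpha_1,\dots,\alpha_n$.
   Context: Diffusion $dX=-\frac{\sigma^2(X)}2dt+\sigma(X)dW$, $a=\sigma^2$ satisfying Assumption A$_N$ ($a$ is $N$ times continuously differentiable, with $a$ and its derivatives up to order $N$ bounded and Lipschitz). Basepoint $\bar x$: $\alpha_0=a(\bar x)$, $\alpha_n=\frac12a^{(n)}(\bar x)/n!$. $L_0=\frac{\alpha_0}2(\partial_{xx}-\partial_x)+\partial_t$, $L_n=L_0+\sum_{k=1}^n\alpha_k(x-\bar x)^k(\partial_{xx}-\partial_x)$. $G^0$ is the (Gaussian) fundamental solution of $L_0$; for $k\ge1$, $G^k(\cdot,\cdot;T,y)$ solves $L_0G^k=-\sum_{h=1}^k\alpha_h(x-\bar x)^h(\partial_{xx}-\partial_x)G^{k-h}$ on $(0,T)\times\mathbb R$, $G^k(T,\cdot;T,y)=0$. *)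

theory Defs
  imports "HOL-Analysis.Analysis"
begin

definition assumption_A :: "nat \<Rightarrow> (real \<Rightarrow> real) \<Rightarrow> bool" where
  "assumption_A N a \<longleftrightarrow>
     (\<forall>k<N. \<forall>x. ((deriv ^^ k) a) differentiable (at x)) \<and>
     (\<forall>k\<le>N. continuous_on UNIV ((deriv ^^ k) a) \<and>
              bounded (range ((deriv ^^ k) a)) \<and>
              (\<exists>L. lipschitz_on L UNIV ((deriv ^^ k) a)))"

definition alpha :: "(real \<Rightarrow> real) \<Rightarrow> real \<Rightarrow> nat \<Rightarrow> real" where
  "alpha a xbar n = (if n = 0 then a xbar else ((deriv ^^ n) a xbar) / (2 * fact n))"

text \<open>Gaussian fundamental solution G^0(t,x;T,y) of
  L_0 = (alpha_0/2)(d_xx - d_x) + d_t (transition density of the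
  arithmetic Brownian motion with drift -alpha_0/2 and variance alpha_0).\<close>
definition G0 :: "real \<Rightarrow> real \<Rightarrow> real \<Rightarrow> real \<Rightarrow> real \<Rightarrow> real" where
  "G0 a0 t x T y =
     exp (- ((y - x + a0 * (T - t) / 2)^2) / (2 * a0 * (T - t))) / sqrt (2 * pi * a0 * (T - t))"

definition idx :: "nat \<Rightarrow> (nat \<times> nat \<times> nat) set" where
  "idx n = {(i, j, k). i \<le> n \<and> j \<le> n * (n + 3) \<and> k \<le> n * (n + 5) div 2 \<and> n + k \<le> i + j}"

definition Gform :: "(nat \<Rightarrow> nat \<Rightarrow> nat \<Rightarrow> real) \<Rightarrow> nat \<Rightarrow> real \<Rightarrow> real \<Rightarrow> real \<Rightarrow> real
                     \<Rightarrow> real \<Rightarrow> real \<Rightarrow> real" where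
  "Gform c n a0 xbar T y t x =
     (\<Sum>(i, j, k)\<in>idx n. c i j k * (x - xbar)^i * (sqrt (T - t))^j *
        (deriv ^^ k) (\<lambda>z. G0 a0 t z T y) x)"

definition Lxx :: "(real \<Rightarrow> real \<Rightarrow> real) \<Rightarrow> real \<Rightarrow> real \<Rightarrow> real" where
  "Lxx u t x = deriv (\<lambda>z. deriv (\<lambda>w. u t w) z) x - deriv (\<lambda>w. u t w) x"

definition test_function :: "(real \<Rightarrow> real) \<Rightarrow> bool" where
  "test_function \<phi> \<longleftrightarrow> (\<forall>k x. ((deriv ^^ k) \<phi>) differentiable (at x)) \<and> bounded {x. \<phi> x \<noteq> 0}"

text \<open>u solves L_0 u = f on (0,T) x R (classically), with terminal condition
  u(T,.) = 0 understood in the sense of distributions in x (as t -> T-).\<close>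
definition cauchy_sol :: "real \<Rightarrow> real \<Rightarrow> (real \<Rightarrow> real \<Rightarrow> real) \<Rightarrow> (real \<Rightarrow> real \<Rightarrow> real) \<Rightarrow> bool" where
  "cauchy_sol a0 T u f \<longleftrightarrow>
     (\<forall>t\<in>{0<..<T}. \<forall>x.
        (\<lambda>s. u s x) differentiable (at t) \<and>
        (\<lambda>z. u t z) differentiable (at x) \<and>
        (\<lambda>z. deriv (\<lambda>w. u t w) z) differentiable (at x) \<and>
        a0 / 2 * Lxx u t x + deriv (\<lambda>s. u s x) t = f t x) \<and>
     (\<forall>\<phi>. test_function \<phi> \<longrightarrow>
        (\<forall>t\<in>{0<..<T}. integrable lborel (\<lambda>x. u t x * \<phi> x)) \<and>
        ((\<lambda>t. integral\<^sup>L lborel (\<lambda>x. u t x * \<phi> x)) \<longlongrightarrow> 0) (at_left T))"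

inductive_set poly_fun :: "nat \<Rightarrow> ((nat \<Rightarrow> real) \<Rightarrow> real) set" for n :: nat where
  const: "(\<lambda>\<alpha>. c) \<in> poly_fun n"
| var: "i \<le> n \<Longrightarrow> (\<lambda>\<alpha>. \<alpha> i) \<in> poly_fun n"
| add: "p \<in> poly_fun n \<Longrightarrow> q \<in> poly_fun n \<Longrightarrow> (\<lambda>\<alpha>. p \<alpha> + q \<alpha>) \<in> poly_fun n"
| mult: "p \<in> poly_fun n \<Longrightarrow> q \<in> poly_fun n \<Longrightarrow> (\<lambda>\<alpha>. p \<alpha> * q \<alpha>) \<in> poly_fun n"

end

theory Submission
  imports Defs "HOL-Probability.Probability"
begin

definition hk :: "real \<Rightarrow> real \<Rightarrow> real" where
  "hk w v = exp (- (w^2) / (2 * v)) / sqrt (2 * pi * v)"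

lemma hk_deriv:
  assumes w: "(w has_real_derivative w') (at s)" and v: "(v has_real_derivative v') (at s)"
    and vp: "v s > 0"
  shows "((\<lambda>s. hk (w s) (v s)) has_real_derivative
      (w' * (- w s / v s) + v' * (w s ^ 2 / (2 * v s ^ 2) - 1 / (2 * v s))) * hk (w s) (v s)) (at s)"
proof -
  have sp: "sqrt (2 * pi * v s) > 0" using vp by simp
  have ss: "sqrt (2 * pi * v s) * sqrt (2 * pi * v s) = 2 * pi * v s" using vp by simp
  have inv: "inverse (sqrt (2 * pi * v s)) = sqrt (2 * pi * v s) / (2 * pi * v s)"
    using vp by (simp add: field_simps)
  have dv: "\<And>e. e / sqrt (2 * pi * v s) = e * sqrt (2 * pi * v s) / (2 * pi * v s)"
    using ss sp by (metis inv divide_inverse mult.commute times_divide_eq_right)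
  show ?thesis
  unfolding hk_def
  using vp sp pi_gt_zero
  apply (auto intro!: derivative_eq_intros w v simp: inv)
  subgoal by (smt (verit) mult_pos_pos pi_gt_zero)
  apply (simp only: dv)
  apply (simp add: field_simps power2_eq_square)
  done
qed

lemma mono_deriv:
  assumes w: "(w has_real_derivative w') (at s)" and v: "(v has_real_derivative v') (at s)"
    and vp: "v s > 0"
  shows "((\<lambda>s. w s ^ a / v s ^ b * hk (w s) (v s)) has_real_derivative
      (w' * (real a * w s ^ (a - 1) / v s ^ b - w s ^ (a+1) / v s ^ (b+1))
     + v' * (- real b * w s ^ a / v s ^ (b+1) + w s ^ (a+2) / (2 * v s ^ (b+2)) - w s ^ a / (2 * v s ^ (b+1))))
      * hk (w s) (v s)) (at s)"
  using vp
  apply (auto intro!: derivative_eq_intros w v hk_deriv)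
  apply (cases a; cases b)
  apply (simp_all add: field_simps power2_eq_square)
  done
definition heval :: "(real \<times> nat \<times> nat) list \<Rightarrow> real \<Rightarrow> real \<Rightarrow> real" where
  "heval xs w v = sum_list (map (\<lambda>(c,a,b). c * w ^ a / v ^ b) xs)"

definition dwl :: "(real \<times> nat \<times> nat) list \<Rightarrow> (real \<times> nat \<times> nat) list" where
  "dwl xs = concat (map (\<lambda>(c,a,b). [(c * real a, a - 1, b), (- c, a + 1, b + 1)]) xs)"

definition dvl :: "(real \<times> nat \<times> nat) list \<Rightarrow> (real \<times> nat \<times> nat) list" where
  "dvl xs = concat (map (\<lambda>(c,a,b). [(- c * real b, a, b + 1), (c / 2, a + 2, b + 2), (- c / 2, a, b + 1)]) xs)"

definition scl :: "real \<Rightarrow> (real \<times> nat \<times> nat) list \<Rightarrow> (real \<times> nat \<times> nat) list" where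
  "scl q xs = map (\<lambda>(c,a,b). (q * c, a, b)) xs"

lemma heval_simps[simp]:
  "heval [] w v = 0"
  "heval (x # xs) w v = (case x of (c,a,b) \<Rightarrow> c * w ^ a / v ^ b) + heval xs w v"
  "heval (xs @ ys) w v = heval xs w v + heval ys w v"
  by (auto simp: heval_def)

lemma dwl_simps[simp]: "dwl [] = []" "dwl (x # xs) = (case x of (c,a,b) \<Rightarrow> [(c * real a, a - 1, b), (- c, a + 1, b + 1)]) @ dwl xs"
  "dwl (xs @ ys) = dwl xs @ dwl ys"
  by (auto simp: dwl_def)

lemma dvl_simps[simp]: "dvl [] = []" "dvl (x # xs) = (case x of (c,a,b) \<Rightarrow> [(- c * real b, a, b + 1), (c / 2, a + 2, b + 2), (- c / 2, a, b + 1)]) @ dvl xs"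
  "dvl (xs @ ys) = dvl xs @ dvl ys"
  by (auto simp: dvl_def)

lemma scl_simps[simp]: "scl q [] = []" "scl q (x # xs) = (case x of (c,a,b) \<Rightarrow> (q * c, a, b)) # scl q xs"
  by (auto simp: scl_def split: prod.splits)

lemma heval_scl: "heval (scl q xs) w v = q * heval xs w v"
  by (induction xs) (auto simp: algebra_simps)

lemma heval_dwl_scl: "heval (dwl (scl q xs)) w v = q * heval (dwl xs) w v"
  by (induction xs) (auto simp: algebra_simps)

lemma list_deriv:
  assumes w: "(w has_real_derivative w') (at s)" and v: "(v has_real_derivative v') (at s)"
    and vp: "v s > 0"
  shows "((\<lambda>s. heval xs (w s) (v s) * hk (w s) (v s)) has_real_derivative
     (w' * heval (dwl xs) (w s) (v s) + v' * heval (dvl xs) (w s) (v s)) * hk (w s) (v s)) (at s)"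
proof (induction xs)
  case Nil
  then show ?case by simp
next
  case (Cons x xs)
  obtain c a b where x: "x = (c,a,b)" by (cases x) auto
  have m: "((\<lambda>s. c * (w s ^ a / v s ^ b * hk (w s) (v s))) has_real_derivative c * (
      (w' * (real a * w s ^ (a - 1) / v s ^ b - w s ^ (a+1) / v s ^ (b+1))
     + v' * (- real b * w s ^ a / v s ^ (b+1) + w s ^ (a+2) / (2 * v s ^ (b+2)) - w s ^ a / (2 * v s ^ (b+1))))
      * hk (w s) (v s))) (at s)"
    by (intro DERIV_cmult mono_deriv w v vp)
  have "((\<lambda>s. c * (w s ^ a / v s ^ b * hk (w s) (v s)) + heval xs (w s) (v s) * hk (w s) (v s)) has_real_derivative
     c * (
      (w' * (real a * w s ^ (a - 1) / v s ^ b - w s ^ (a+1) / v s ^ (b+1))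
     + v' * (- real b * w s ^ a / v s ^ (b+1) + w s ^ (a+2) / (2 * v s ^ (b+2)) - w s ^ a / (2 * v s ^ (b+1))))
      * hk (w s) (v s)) + (w' * heval (dwl xs) (w s) (v s) + v' * heval (dvl xs) (w s) (v s)) * hk (w s) (v s)) (at s)"
    by (intro DERIV_add m Cons)
  then show ?case
    by (simp add: x algebra_simps) 
qed


lemma comm_dv_dw:
  assumes "v \<noteq> 0"
  shows "heval (dvl (dwl xs)) w v = heval (dwl (dvl xs)) w v"
proof (induction xs)
  case Nil then show ?case by simp
next
  case (Cons x xs)
  obtain c a b where x: "x = (c,a,b)" by (cases x) auto
  show ?case using Cons assms
    by (cases a) (auto simp: x field_simps power2_eq_square)
qed

lemma dwl_determined:
  assumes vp: "v > 0" and eq: "\<And>w. heval xs w v = heval ys w v"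
  shows "heval (dwl xs) w v = heval (dwl ys) w v"
proof -
  have d: "((\<lambda>s. heval zs s v * hk s v) has_real_derivative
     (1 * heval (dwl zs) w v + 0 * heval (dvl zs) w v) * hk w v) (at w)" for zs
    using list_deriv[of "\<lambda>s. s" 1 w "\<lambda>s. v" 0 zs] vp
    by (auto intro!: derivative_eq_intros)
  have "heval (dwl xs) w v * hk w v = heval (dwl ys) w v * hk w v"
    using DERIV_unique[OF d[of xs]] d[of ys] eq by simp
  moreover have "hk w v > 0" using vp by (simp add: hk_def)
  ultimately show ?thesis by simp
qed

definition Pk :: "nat \<Rightarrow> (real \<times> nat \<times> nat) list" where
  "Pk k = (dwl ^^ k) [(1,0,0)]"

lemma Pk_Suc: "Pk (Suc k) = dwl (Pk k)"
  by (simp add: Pk_def)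

lemma heat_Pk:
  assumes vp: "v > 0"
  shows "heval (dvl (Pk k)) w v = 1/2 * heval (dwl (dwl (Pk k))) w v"
proof (induction k arbitrary: w)
  case 0
  then show ?case using vp by (simp add: Pk_def field_simps power2_eq_square)
next
  case (Suc k)
  have "heval (dvl (Pk (Suc k))) w v = heval (dwl (dvl (Pk k))) w v"
    using comm_dv_dw vp by (simp add: Pk_Suc)
  also have "\<dots> = heval (dwl (scl (1/2) (dwl (dwl (Pk k))))) w v"
    by (rule dwl_determined[OF vp]) (simp add: heval_scl Suc)
  also have "\<dots> = 1/2 * heval (dwl (dwl (Pk (Suc k)))) w v"
    by (simp add: heval_dwl_scl Pk_Suc)
  finally show ?case .
qed


definition Dk :: "real \<Rightarrow> real \<Rightarrow> real \<Rightarrow> nat \<Rightarrow> real \<Rightarrow> real \<Rightarrow> real" where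
  "Dk a0 T y k t x = (deriv ^^ k) (\<lambda>z. G0 a0 t z T y) x"

lemma G0_hk:
  assumes "a0 > 0" "t < T"
  shows "G0 a0 t z T y = hk (z - y - a0 * (T - t) / 2) (a0 * (T - t))"
proof -
  have "(y - z + a0 * (T - t) / 2)^2 = (z - y - a0 * (T - t) / 2)^2"
    by (simp add: power2_eq_square algebra_simps)
  then show ?thesis unfolding G0_def hk_def by (simp add: mult.assoc)
qed

lemma Dk_eq:
  assumes a0: "a0 > 0" and t: "t < T"
  shows "(deriv ^^ k) (\<lambda>z. G0 a0 t z T y) =
    (\<lambda>z. heval (Pk k) (z - y - a0 * (T - t) / 2) (a0 * (T - t)) * hk (z - y - a0 * (T - t) / 2) (a0 * (T - t)))"
proof (induction k)
  case 0
  then show ?case using G0_hk[OF a0 t] by (simp add: Pk_def)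
next
  case (Suc k)
  have vp: "a0 * (T - t) > 0" using a0 t by simp
  have d: "((\<lambda>z. heval (Pk k) (z - y - a0 * (T - t) / 2) (a0 * (T - t)) * hk (z - y - a0 * (T - t) / 2) (a0 * (T - t)))
     has_real_derivative heval (Pk (Suc k)) (z - y - a0 * (T - t) / 2) (a0 * (T - t)) * hk (z - y - a0 * (T - t) / 2) (a0 * (T - t))) (at z)" for z
  proof -
    have "((\<lambda>z. heval (Pk k) (z - y - a0 * (T - t) / 2) (a0 * (T - t)) * hk (z - y - a0 * (T - t) / 2) (a0 * (T - t)))
     has_real_derivative (1 * heval (dwl (Pk k)) (z - y - a0 * (T - t) / 2) (a0 * (T - t)) + 0 * heval (dvl (Pk k)) (z - y - a0 * (T - t) / 2) (a0 * (T - t))) * hk (z - y - a0 * (T - t) / 2) (a0 * (T - t))) (at z)"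
      by (rule list_deriv) (use vp in \<open>auto intro!: derivative_eq_intros\<close>)
    then show ?thesis by (simp add: Pk_Suc)
  qed
  show ?case
    by (simp add: Suc) (rule ext, rule DERIV_imp_deriv[OF d])
qed

lemma Dk_dx:
  assumes a0: "a0 > 0" and t: "t < T"
  shows "((\<lambda>z. Dk a0 T y k t z) has_real_derivative Dk a0 T y (Suc k) t x) (at x)"
proof -
  have vp: "a0 * (T - t) > 0" using a0 t by simp
  show ?thesis
    unfolding Dk_def Dk_eq[OF a0 t]
  proof -
    have "((\<lambda>z. heval (Pk k) (z - y - a0 * (T - t) / 2) (a0 * (T - t)) * hk (z - y - a0 * (T - t) / 2) (a0 * (T - t)))
     has_real_derivative (1 * heval (dwl (Pk k)) (x - y - a0 * (T - t) / 2) (a0 * (T - t)) + 0 * heval (dvl (Pk k)) (x - y - a0 * (T - t) / 2) (a0 * (T - t))) * hk (x - y - a0 * (T - t) / 2) (a0 * (T - t))) (at x)"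
      by (rule list_deriv) (use vp in \<open>auto intro!: derivative_eq_intros\<close>)
    then show "((\<lambda>z. heval (Pk k) (z - y - a0 * (T - t) / 2) (a0 * (T - t)) * hk (z - y - a0 * (T - t) / 2) (a0 * (T - t)))
     has_real_derivative heval (Pk (Suc k)) (x - y - a0 * (T - t) / 2) (a0 * (T - t)) * hk (x - y - a0 * (T - t) / 2) (a0 * (T - t))) (at x)" by (simp add: Pk_Suc)
  qed
qed

lemma Dk_dt:
  assumes a0: "a0 > 0" and t: "t < T"
  shows "((\<lambda>s. Dk a0 T y k s x) has_real_derivative
     (- a0 / 2) * (Dk a0 T y (k+2) t x - Dk a0 T y (k+1) t x)) (at t)"
proof -
  have vp: "a0 * (T - t) > 0" using a0 t by simp
  let ?w = "\<lambda>s. x - y - a0 * (T - s) / 2" and ?v = "\<lambda>s. a0 * (T - s)"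
  have d: "((\<lambda>s. heval (Pk k) (?w s) (?v s) * hk (?w s) (?v s)) has_real_derivative
     (a0 / 2 * heval (dwl (Pk k)) (?w t) (?v t) + (- a0) * heval (dvl (Pk k)) (?w t) (?v t)) * hk (?w t) (?v t)) (at t)"
    by (rule list_deriv) (use vp in \<open>auto intro!: derivative_eq_intros\<close>)
  have e: "(a0 / 2 * heval (dwl (Pk k)) (?w t) (?v t) + (- a0) * heval (dvl (Pk k)) (?w t) (?v t)) * hk (?w t) (?v t)
     = (- a0 / 2) * (Dk a0 T y (k+2) t x - Dk a0 T y (k+1) t x)"
    unfolding Dk_def Dk_eq[OF a0 t] heat_Pk[OF vp] by (simp add: Pk_Suc algebra_simps)
  show ?thesis
    apply (rule has_field_derivative_transform_within_open[OF d[unfolded e], of "{..<T}"])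
    using t by (auto simp: Dk_def Dk_eq[OF a0])
qed


type_synonym tm = "((nat \<Rightarrow> real) \<Rightarrow> real) \<times> nat \<times> nat \<times> nat"

definition tv :: "(nat \<Rightarrow> real) \<Rightarrow> real \<Rightarrow> real \<Rightarrow> (nat \<Rightarrow> real) \<Rightarrow> tm \<Rightarrow> real \<Rightarrow> real" where
  "tv \<alpha> xb \<tau> D e x = (case e of (c,i,p,k) \<Rightarrow> c \<alpha> * (x - xb)^i * \<tau>^p * D k)"

definition sev :: "(nat \<Rightarrow> real) \<Rightarrow> real \<Rightarrow> real \<Rightarrow> (nat \<Rightarrow> real) \<Rightarrow> tm list \<Rightarrow> real \<Rightarrow> real" where
  "sev \<alpha> xb \<tau> D xs x = sum_list (map (\<lambda>e. tv \<alpha> xb \<tau> D e x) xs)"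

lemma sev_simps[simp]:
  "sev \<alpha> xb \<tau> D [] x = 0"
  "sev \<alpha> xb \<tau> D (e # xs) x = tv \<alpha> xb \<tau> D e x + sev \<alpha> xb \<tau> D xs x"
  "sev \<alpha> xb \<tau> D (xs @ ys) x = sev \<alpha> xb \<tau> D xs x + sev \<alpha> xb \<tau> D ys x"
  by (auto simp: sev_def)

definition dx1 :: "tm \<Rightarrow> tm list" where
  "dx1 e = (case e of (c,i,p,k) \<Rightarrow> [(\<lambda>\<alpha>. c \<alpha> * real i, i - 1, p, k), (c, i, p, Suc k)])"
definition dt1 :: "tm \<Rightarrow> tm list" where
  "dt1 e = (case e of (c,i,p,k) \<Rightarrow> [(\<lambda>\<alpha>. - real p * c \<alpha>, i, p - 1, k),
      (\<lambda>\<alpha>. - \<alpha> 0 / 2 * c \<alpha>, i, p, k + 2), (\<lambda>\<alpha>. \<alpha> 0 / 2 * c \<alpha>, i, p, k + 1)])"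
definition sc1 :: "((nat \<Rightarrow> real) \<Rightarrow> real) \<Rightarrow> tm \<Rightarrow> tm" where
  "sc1 q e = (case e of (c,i,p,k) \<Rightarrow> (\<lambda>\<alpha>. q \<alpha> * c \<alpha>, i, p, k))"
definition mM1 :: "nat \<Rightarrow> tm \<Rightarrow> tm" where
  "mM1 h e = (case e of (c,i,p,k) \<Rightarrow> (c, i + h, p, k))"

definition "dxs xs = concat (map dx1 xs)"
definition "dts xs = concat (map dt1 xs)"
definition "scs q xs = map (sc1 q) xs"
definition "mulM h xs = map (mM1 h) xs"
definition "Lxs xs = dxs (dxs xs) @ scs (\<lambda>_. -1) (dxs xs)"
definition "L0s xs = scs (\<lambda>\<alpha>. \<alpha> 0 / 2) (Lxs xs) @ dts xs"

lemma ops_simps[simp]: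
  "dxs [] = []" "dxs (e # xs) = dx1 e @ dxs xs" "dxs (xs @ ys) = dxs xs @ dxs ys"
  "dts [] = []" "dts (e # xs) = dt1 e @ dts xs" "dts (xs @ ys) = dts xs @ dts ys"
  "scs q [] = []" "scs q (e # xs) = sc1 q e # scs q xs" "scs q (xs @ ys) = scs q xs @ scs q ys"
  "mulM h [] = []" "mulM h (e # xs) = mM1 h e # mulM h xs" "mulM h (xs @ ys) = mulM h xs @ mulM h ys"
  by (auto simp: dxs_def dts_def scs_def mulM_def)

lemma sev_scs[simp]: "sev \<alpha> xb \<tau> D (scs q xs) x = q \<alpha> * sev \<alpha> xb \<tau> D xs x"
  by (induction xs) (auto simp: tv_def sc1_def algebra_simps split: prod.splits)

lemma sev_dxs_scs[simp]: "sev \<alpha> xb \<tau> D (dxs (scs q xs)) x = q \<alpha> * sev \<alpha> xb \<tau> D (dxs xs) x"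
  by (induction xs) (auto simp: tv_def sc1_def dx1_def algebra_simps split: prod.splits)

lemma sev_dts_scs[simp]: "sev \<alpha> xb \<tau> D (dts (scs q xs)) x = q \<alpha> * sev \<alpha> xb \<tau> D (dts xs) x"
  by (induction xs) (auto simp: tv_def sc1_def dt1_def algebra_simps split: prod.splits)

lemma sev_dxs_dxs_scs[simp]: "sev \<alpha> xb \<tau> D (dxs (dxs (scs q xs))) x = q \<alpha> * sev \<alpha> xb \<tau> D (dxs (dxs xs)) x"
  by (induction xs) (auto simp: tv_def sc1_def dx1_def algebra_simps split: prod.splits)

lemma sev_L0s_append[simp]: "sev \<alpha> xb \<tau> D (L0s (xs @ ys)) x = sev \<alpha> xb \<tau> D (L0s xs) x + sev \<alpha> xb \<tau> D (L0s ys) x"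
  by (simp add: L0s_def Lxs_def algebra_simps)

lemma sev_L0s_scs[simp]: "sev \<alpha> xb \<tau> D (L0s (scs q xs)) x = q \<alpha> * sev \<alpha> xb \<tau> D (L0s xs) x"
  by (simp add: L0s_def Lxs_def algebra_simps)

lemma sev_mulM[simp]: "sev \<alpha> xb \<tau> D (mulM h xs) x = (x - xb)^h * sev \<alpha> xb \<tau> D xs x"
  by (induction xs) (auto simp: tv_def mM1_def algebra_simps power_add split: prod.splits)

fun solve :: "nat \<Rightarrow> nat \<Rightarrow> nat \<Rightarrow> tm list" where
  "solve 0 p k = [(\<lambda>_. -1 / real (p+1), 0, p+1, k)]"
| "solve (Suc 0) p k = [(\<lambda>_. -1 / real (p+1), 1, p+1, k)]
     @ scs (\<lambda>\<alpha>. \<alpha> 0 * 1 / real (p+1)) (solve 0 (p+1) (Suc k))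
     @ scs (\<lambda>\<alpha>. - \<alpha> 0 * 1 / (2 * real (p+1))) (solve 0 (p+1) k)"
| "solve (Suc (Suc i)) p k = [(\<lambda>_. -1 / real (p+1), Suc (Suc i), p+1, k)]
     @ scs (\<lambda>\<alpha>. \<alpha> 0 * real (Suc (Suc i)) / real (p+1)) (solve (Suc i) (p+1) (Suc k))
     @ scs (\<lambda>\<alpha>. - \<alpha> 0 * real (Suc (Suc i)) / (2 * real (p+1))) (solve (Suc i) (p+1) k)
     @ scs (\<lambda>\<alpha>. \<alpha> 0 * real (Suc (Suc i)) * real (Suc i) / (2 * real (p+1))) (solve i (p+1) k)"

lemma L0s_main:
  "sev \<alpha> xb \<tau> D (L0s [(\<lambda>_. -1 / real (p+1), I, p+1, k)]) x =
     (x - xb)^I * \<tau>^p * D k - \<alpha> 0 / (2 * real (p+1)) * \<tau>^(p+1) *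
     (real I * real (I - 1) * (x - xb)^(I - 2) * D k + 2 * real I * (x - xb)^(I - 1) * D (Suc k)
       - real I * (x - xb)^(I - 1) * D k)"
proof -
  have q: "real p + 1 \<noteq> 0" by simp
  show ?thesis
    apply (simp add: L0s_def Lxs_def tv_def dx1_def dt1_def sc1_def algebra_simps)
    apply (cases I)
     apply (simp add: algebra_simps)
    apply (simp add: algebra_simps)
    done
qed

lemma solve_correct:
  "sev \<alpha> xb \<tau> D (L0s (solve i p k)) x = (x - xb)^i * \<tau>^p * D k"
proof (induction i p k rule: solve.induct)
  case (1 p k)
  show ?case using L0s_main[of \<alpha> xb \<tau> D p 0 k x] by simp
next
  case (2 p k)
  define r where "r = real (p+1)"
  have r: "real (p+1) = r" by (simp add: r_def)
  have rp: "r \<noteq> 0" by (simp add: r_def)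
  show ?case
    apply (simp only: solve.simps sev_L0s_append sev_L0s_scs 2 L0s_main)
    apply (simp only: r)
    using rp apply (simp add: field_simps)
    done
next
  case (3 i p k)
  define r where "r = real (p+1)"
  have r: "real (p+1) = r" by (simp add: r_def)
  have rp: "r \<noteq> 0" by (simp add: r_def)
  show ?case
    apply (simp only: solve.simps sev_L0s_append sev_L0s_scs 3 L0s_main)
    apply (simp only: r)
    using rp apply (simp add: field_simps)
    done
qed


definition solveL :: "tm list \<Rightarrow> tm list" where
  "solveL xs = concat (map (\<lambda>(c,i,p,k). scs c (solve i p k)) xs)"

lemma sev_L0s_Nil[simp]: "sev \<alpha> xb \<tau> D (L0s []) x = 0"
  by (simp add: L0s_def Lxs_def)

lemma solveL_correct: "sev \<alpha> xb \<tau> D (L0s (solveL xs)) x = sev \<alpha> xb \<tau> D xs x"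
proof (induction xs)
  case Nil then show ?case by (simp add: solveL_def)
next
  case (Cons e xs)
  obtain c i p k where e: "e = (c,i,p,k)" by (cases e) auto
  have "solveL (e # xs) = scs c (solve i p k) @ solveL xs" by (simp add: solveL_def e)
  then show ?case using Cons by (simp only: sev_L0s_append sev_L0s_scs solve_correct) (simp add: e tv_def)
qed

fun Gl :: "nat \<Rightarrow> tm list" where
  "Gl m = (if m = 0 then [(\<lambda>_. 1, 0, 0, 0)]
     else solveL (concat (map (\<lambda>h. scs (\<lambda>\<alpha>. - \<alpha> h) (mulM h (Lxs (Gl (m - h))))) [1..<Suc m])))"

declare Gl.simps[simp del]

lemma Gl_0: "Gl 0 = [(\<lambda>_. 1, 0, 0, 0)]" by (simp add: Gl.simps)

lemma Gl_L0:
  assumes "m \<ge> 1"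
  shows "sev \<alpha> xb \<tau> D (L0s (Gl m)) x = (\<Sum>h = 1..m. - \<alpha> h * (x - xb)^h * sev \<alpha> xb \<tau> D (Lxs (Gl (m - h))) x)"
proof -
  have e: "sev \<alpha> xb \<tau> D (concat (map f hs)) x = sum_list (map (\<lambda>h. sev \<alpha> xb \<tau> D (f h) x) hs)" for f hs
    by (induction hs) auto
  show ?thesis
    using assms
    by (subst Gl.simps) (simp add: solveL_correct e sum_list_distinct_conv_sum_set atLeastLessThanSuc_atLeastAtMost mult.assoc del: upt_Suc)
qed


lemma mem_scs: "(c,i,p,k) \<in> set (scs q xs) \<Longrightarrow> \<exists>c0. (c0,i,p,k) \<in> set xs"
  by (auto simp: scs_def sc1_def split: prod.splits)

lemma mem_mulM: "(c,i,p,k) \<in> set (mulM h xs) \<Longrightarrow> \<exists>c0 i0. (c0,i0,p,k) \<in> set xs \<and> i = i0 + h"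
  by (auto simp: mulM_def mM1_def split: prod.splits)

lemma mem_dxs: "(c,i,p,k) \<in> set (dxs xs) \<Longrightarrow>
   \<exists>c0 i0 k0. (c0,i0,p,k0) \<in> set xs \<and> i \<le> i0 \<and> k0 \<le> k \<and> k \<le> k0 + 1 \<and> i0 + k \<le> i + k0 + 1"
  by (auto simp: dxs_def dx1_def split: prod.splits) force+

lemma mem_Lxs: "(c,i,p,k) \<in> set (Lxs xs) \<Longrightarrow>
   \<exists>c0 i0 k0. (c0,i0,p,k0) \<in> set xs \<and> i \<le> i0 \<and> k0 \<le> k \<and> k \<le> k0 + 2 \<and> i0 + k \<le> i + k0 + 2"
  unfolding Lxs_def
  apply (auto dest!: mem_scs)
   apply (drule mem_dxs, clarify, drule mem_dxs, clarify)
   apply (rule exI, rule exI, rule exI, rule conjI, assumption, linarith)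
  apply (drule mem_dxs, clarify)
  apply (rule exI, rule exI, rule exI, rule conjI, assumption, linarith)
  done

lemma solve_bounds:
  "(c',i',p',k') \<in> set (solve i p k) \<Longrightarrow>
     i' \<le> i \<and> p + 1 \<le> p' \<and> p' \<le> p + i + 1 \<and> k \<le> k' \<and> k' \<le> k + i \<and> i + 2*p + k' + 2 \<le> i' + 2*p' + k"
proof (induction i p k arbitrary: c' i' p' k' rule: solve.induct)
  case (1 p k)
  then show ?case by auto
next
  case (2 p k)
  then show ?case by (auto simp: sc1_def scs_def)
next
  case (3 i p k)
  from 3(4) show ?case
    by (auto simp: scs_def sc1_def dest!: 3(1)[simplified] 3(2)[simplified] 3(3)[simplified])
qed


lemma mem_solveL: "(c,i,p,k) \<in> set (solveL xs) \<Longrightarrow>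
  \<exists>c1 i1 p1 k1 c'. (c1,i1,p1,k1) \<in> set xs \<and> (c',i,p,k) \<in> set (solve i1 p1 k1)"
  by (auto simp: solveL_def dest!: mem_scs) blast

lemma arith1: "(m'::nat) < m \<Longrightarrow> m' * (m' + 3) + 2 * m + 2 \<le> m * (m + 3)"
proof -
  assume a: "m' < m"
  then obtain n where m: "m = Suc n" and "m' \<le> n" by (cases m) auto
  then have "m' * (m' + 3) \<le> n * (n + 3)" by (intro mult_le_mono) auto
  then show ?thesis by (simp add: m algebra_simps)
qed

lemma arith2: "(m'::nat) < m \<Longrightarrow> m' * (m' + 5) + 2 * m + 4 \<le> m * (m + 5)"
proof -
  assume a: "m' < m"
  then obtain n where m: "m = Suc n" and "m' \<le> n" by (cases m) auto
  then have "m' * (m' + 5) \<le> n * (n + 5)" by (intro mult_le_mono) auto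
  then show ?thesis by (simp add: m algebra_simps)
qed

lemma Gl_bounds:
  "(c,i,p,k) \<in> set (Gl m) \<Longrightarrow> i \<le> m \<and> 2 * p \<le> m * (m + 3) \<and> 2 * k \<le> m * (m + 5) \<and> m + k \<le> i + 2 * p
     \<and> (m \<ge> 1 \<longrightarrow> p \<ge> 1)"
proof (induction m arbitrary: c i p k rule: less_induct)
  case (less m)
  show ?case
  proof (cases "m = 0")
    case True
    then show ?thesis using less(2) by (simp add: Gl_0)
  next
    case False
    from less(2) False obtain c1 i1 p1 k1 c' where
      e1: "(c1,i1,p1,k1) \<in> set (concat (map (\<lambda>h. scs (\<lambda>\<alpha>. - \<alpha> h) (mulM h (Lxs (Gl (m - h))))) [1..<Suc m]))"
      and e: "(c',i,p,k) \<in> set (solve i1 p1 k1)"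
      by (subst (asm) Gl.simps) (auto dest!: mem_solveL)
    from e1 obtain h where h: "1 \<le> h" "h \<le> m" and
      e1': "(c1,i1,p1,k1) \<in> set (scs (\<lambda>\<alpha>. - \<alpha> h) (mulM h (Lxs (Gl (m - h)))))" by auto
    from mem_scs[OF e1'] obtain c2 where "(c2,i1,p1,k1) \<in> set (mulM h (Lxs (Gl (m - h))))" by blast
    from mem_mulM[OF this] obtain c2' i2 where e2: "(c2',i2,p1,k1) \<in> set (Lxs (Gl (m - h)))" and i1: "i1 = i2 + h" by blast
    from mem_Lxs[OF e2] obtain c3 i3 k3 where e3: "(c3,i3,p1,k3) \<in> set (Gl (m - h))"
      and b2: "i2 \<le> i3" "k3 \<le> k1" "k1 \<le> k3 + 2" "i3 + k1 \<le> i2 + k3 + 2" by blast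
    have lt: "m - h < m" using h False by simp
    from less(1)[OF lt e3] have b3: "i3 \<le> m - h" "2 * p1 \<le> (m - h) * (m - h + 3)"
      "2 * k3 \<le> (m - h) * (m - h + 5)" "m - h + k3 \<le> i3 + 2 * p1" by auto
    from solve_bounds[OF e] have b1: "i \<le> i1" "p1 + 1 \<le> p" "p \<le> p1 + i1 + 1" "k1 \<le> k" "k \<le> k1 + i1"
       "i1 + 2 * p1 + k + 2 \<le> i + 2 * p + k1" by auto
    have A1: "(m - h) * (m - h + 3) + 2 * m + 2 \<le> m * (m + 3)" by (rule arith1[OF lt])
    have A2: "(m - h) * (m - h + 5) + 2 * m + 4 \<le> m * (m + 5)" by (rule arith2[OF lt])
    have "i \<le> m" using b1 b2 b3 i1 h by linarith
    moreover have "2 * p \<le> m * (m + 3)" using b1 b2 b3 i1 h A1 by linarith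
    moreover have "2 * k \<le> m * (m + 5)" using b1 b2 b3 i1 h A2 by linarith
    moreover have "m + k \<le> i + 2 * p" using b1 b2 b3 i1 h by linarith
    moreover have "p \<ge> 1" using b1 by linarith
    ultimately show ?thesis by auto
  qed
qed


lemma poly_fun_mono: "p \<in> poly_fun m \<Longrightarrow> m \<le> m' \<Longrightarrow> p \<in> poly_fun m'"
  by (induction rule: poly_fun.induct) (auto intro: poly_fun.intros)

lemma poly_fun_ext: "f \<in> poly_fun n \<Longrightarrow> (\<And>\<alpha>. g \<alpha> = f \<alpha>) \<Longrightarrow> g \<in> poly_fun n"
proof -
  assume "f \<in> poly_fun n" "\<And>\<alpha>. g \<alpha> = f \<alpha>"
  then have "g = f" by auto
  then show ?thesis using \<open>f \<in> poly_fun n\<close> by simp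
qed

lemma poly_fun_var_const: "j \<le> n \<Longrightarrow> (\<lambda>\<alpha>. \<alpha> j * c) \<in> poly_fun n"
proof -
  assume "j \<le> n"
  then have "(\<lambda>\<alpha>. (\<lambda>\<alpha>. \<alpha> j) \<alpha> * (\<lambda>\<alpha>. c) \<alpha>) \<in> poly_fun n"
    by (intro poly_fun.mult poly_fun.var poly_fun.const)
  then show ?thesis by simp
qed

lemma poly_fun_mult': "p \<in> poly_fun n \<Longrightarrow> q \<in> poly_fun n \<Longrightarrow> (\<lambda>\<alpha>. p \<alpha> * q \<alpha>) \<in> poly_fun n"
  by (rule poly_fun.mult)

definition allp :: "nat \<Rightarrow> tm list \<Rightarrow> bool" where
  "allp n xs \<longleftrightarrow> (\<forall>e\<in>set xs. fst e \<in> poly_fun n)"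

lemma allp_simps[simp]: "allp n []" "allp n (e # xs) \<longleftrightarrow> fst e \<in> poly_fun n \<and> allp n xs"
  "allp n (xs @ ys) \<longleftrightarrow> allp n xs \<and> allp n ys"
  by (auto simp: allp_def)

lemma allp_scs: "q \<in> poly_fun n \<Longrightarrow> allp n xs \<Longrightarrow> allp n (scs q xs)"
  by (induction xs) (auto simp: sc1_def intro: poly_fun.mult split: prod.splits)

lemma allp_mulM: "allp n xs \<Longrightarrow> allp n (mulM h xs)"
  by (induction xs) (auto simp: mM1_def split: prod.splits)

lemma allp_dxs: "allp n xs \<Longrightarrow> allp n (dxs xs)"
  apply (induction xs)
   apply (auto simp: dx1_def split: prod.splits)
  apply (rule poly_fun_mult'[of _ n "\<lambda>_. real _", simplified])
   apply (auto intro: poly_fun.const)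
  done

lemma allp_Lxs: "allp n xs \<Longrightarrow> allp n (Lxs xs)"
  by (auto simp: Lxs_def intro!: allp_dxs allp_scs poly_fun.const)

lemma allp_solve: "allp n (solve i p k)"
proof (induction i p k rule: solve.induct)
  case (1 p k)
  then show ?case by (auto intro: poly_fun.const)
next
  case (2 p k)
  have a: "(\<lambda>\<alpha>. \<alpha> 0 * 1 / real (p + 1)) \<in> poly_fun n"
    by (rule poly_fun_ext[OF poly_fun_var_const[of 0 n "1 / real (p+1)"]]) auto
  have b: "(\<lambda>\<alpha>. - \<alpha> 0 * 1 / (2 * real (p + 1))) \<in> poly_fun n"
    by (rule poly_fun_ext[OF poly_fun_var_const[of 0 n "- 1 / (2 * real (p+1))"]]) (auto simp: field_simps)
  show ?case
    apply (simp only: solve.simps(2) allp_simps(1,2,3))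
    apply (intro conjI allp_scs a b 2 allp_simps(1))
    apply (auto intro: poly_fun.const)
    done
next
  case (3 i p k)
  have a: "(\<lambda>\<alpha>. \<alpha> 0 * real (Suc (Suc i)) / real (p + 1)) \<in> poly_fun n"
    by (rule poly_fun_ext[OF poly_fun_var_const[of 0 n "real (Suc (Suc i)) / real (p+1)"]]) auto
  have b: "(\<lambda>\<alpha>. - \<alpha> 0 * real (Suc (Suc i)) / (2 * real (p + 1))) \<in> poly_fun n"
    by (rule poly_fun_ext[OF poly_fun_var_const[of 0 n "- real (Suc (Suc i)) / (2 * real (p+1))"]]) (auto simp: field_simps)
  have c: "(\<lambda>\<alpha>. \<alpha> 0 * real (Suc (Suc i)) * real (Suc i) / (2 * real (p + 1))) \<in> poly_fun n"
    by (rule poly_fun_ext[OF poly_fun_var_const[of 0 n "real (Suc (Suc i)) * real (Suc i) / (2 * real (p+1))"]]) auto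
  show ?case
    apply (simp only: solve.simps(3) allp_simps(1,2,3))
    apply (intro conjI allp_scs a b c 3 allp_simps(1))
    apply (auto intro: poly_fun.const)
    done
qed

lemma allp_solveL: "allp n xs \<Longrightarrow> allp n (solveL xs)"
  by (induction xs) (auto simp: solveL_def intro!: allp_scs allp_solve)

lemma allp_concat: "(\<And>h. h \<in> set hs \<Longrightarrow> allp n (f h)) \<Longrightarrow> allp n (concat (map f hs))"
  by (induction hs) auto

lemma allp_mono: "allp m xs \<Longrightarrow> m \<le> m' \<Longrightarrow> allp m' xs"
  by (auto simp: allp_def intro: poly_fun_mono)

lemma allp_Gl: "allp m (Gl m)"
proof (induction m rule: less_induct)
  case (less m)
  show ?case
  proof (cases "m = 0")
    case True
    then show ?thesis by (simp add: Gl_0 poly_fun.const)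
  next
    case False
    have "allp m (concat (map (\<lambda>h. scs (\<lambda>\<alpha>. - \<alpha> h) (mulM h (Lxs (Gl (m - h))))) [1..<Suc m]))"
    proof (rule allp_concat)
      fix h assume h: "h \<in> set [1..<Suc m]"
      have q: "(\<lambda>\<alpha>. - \<alpha> h) \<in> poly_fun m"
        by (rule poly_fun_ext[OF poly_fun_var_const[of h m "-1"]]) (use h in auto)
      have "allp (m - h) (Gl (m - h))" using less h False by auto
      then have "allp m (Gl (m - h))" by (rule allp_mono) auto
      then show "allp m (scs (\<lambda>\<alpha>. - \<alpha> h) (mulM h (Lxs (Gl (m - h)))))"
        by (intro allp_scs q allp_mulM allp_Lxs)
    qed
    then show ?thesis using False by (subst Gl.simps) (simp add: allp_solveL)
  qed
qed


definition S :: "(nat \<Rightarrow> real) \<Rightarrow> real \<Rightarrow> real \<Rightarrow> real \<Rightarrow> tm list \<Rightarrow> real \<Rightarrow> real \<Rightarrow> real" where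
  "S \<alpha> xb T y xs t x = sev \<alpha> xb (T - t) (\<lambda>k. Dk (\<alpha> 0) T y k t x) xs x"

lemma S_simps[simp]: "S \<alpha> xb T y [] t x = 0"
  "S \<alpha> xb T y (e # xs) t x = tv \<alpha> xb (T - t) (\<lambda>k. Dk (\<alpha> 0) T y k t x) e x + S \<alpha> xb T y xs t x"
  "S \<alpha> xb T y (xs @ ys) t x = S \<alpha> xb T y xs t x + S \<alpha> xb T y ys t x"
  by (auto simp: S_def)

lemma SX:
  assumes a0: "\<alpha> 0 > 0" and t: "t < T"
  shows "((\<lambda>z. S \<alpha> xb T y xs t z) has_real_derivative S \<alpha> xb T y (dxs xs) t x) (at x)"
proof (induction xs)
  case Nil then show ?case by simp
next
  case (Cons e xs)
  obtain c i p k where e: "e = (c,i,p,k)" by (cases e) auto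
  have d1: "((\<lambda>z. (z - xb)^i) has_real_derivative real i * (x - xb)^(i-1)) (at x)"
    by (auto intro!: derivative_eq_intros)
  have d: "((\<lambda>z. c \<alpha> * (T - t)^p * ((z - xb)^i * Dk (\<alpha> 0) T y k t z)) has_real_derivative
     c \<alpha> * (T - t)^p * ((x - xb)^i * Dk (\<alpha> 0) T y (Suc k) t x + real i * (x - xb)^(i-1) * Dk (\<alpha> 0) T y k t x)) (at x)"
    by (intro DERIV_cmult DERIV_mult' d1 Dk_dx a0 t)
  have "((\<lambda>z. c \<alpha> * (T - t)^p * ((z - xb)^i * Dk (\<alpha> 0) T y k t z) + S \<alpha> xb T y xs t z) has_real_derivative
     c \<alpha> * (T - t)^p * ((x - xb)^i * Dk (\<alpha> 0) T y (Suc k) t x + real i * (x - xb)^(i-1) * Dk (\<alpha> 0) T y k t x)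
     + S \<alpha> xb T y (dxs xs) t x) (at x)"
    by (intro DERIV_add d Cons)
  then show ?case by (simp add: e tv_def dx1_def algebra_simps)
qed

lemma ST:
  assumes a0: "\<alpha> 0 > 0" and t: "t < T"
  shows "((\<lambda>s. S \<alpha> xb T y xs s x) has_real_derivative S \<alpha> xb T y (dts xs) t x) (at t)"
proof (induction xs)
  case Nil then show ?case by simp
next
  case (Cons e xs)
  obtain c i p k where e: "e = (c,i,p,k)" by (cases e) auto
  have d1: "((\<lambda>s. (T - s)^p) has_real_derivative - real p * (T - t)^(p-1)) (at t)"
    by (auto intro!: derivative_eq_intros)
  have d: "((\<lambda>s. c \<alpha> * (x - xb)^i * ((T - s)^p * Dk (\<alpha> 0) T y k s x)) has_real_derivative
     c \<alpha> * (x - xb)^i * ((T - t)^p * ((- \<alpha> 0 / 2) * (Dk (\<alpha> 0) T y (k+2) t x - Dk (\<alpha> 0) T y (k+1) t x))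
        + - real p * (T - t)^(p-1) * Dk (\<alpha> 0) T y k t x)) (at t)"
    by (intro DERIV_cmult DERIV_mult' d1 Dk_dt a0 t)
  have "((\<lambda>s. c \<alpha> * (x - xb)^i * ((T - s)^p * Dk (\<alpha> 0) T y k s x) + S \<alpha> xb T y xs s x) has_real_derivative
     c \<alpha> * (x - xb)^i * ((T - t)^p * ((- \<alpha> 0 / 2) * (Dk (\<alpha> 0) T y (k+2) t x - Dk (\<alpha> 0) T y (k+1) t x))
        + - real p * (T - t)^(p-1) * Dk (\<alpha> 0) T y k t x)
     + S \<alpha> xb T y (dts xs) t x) (at t)"
    by (intro DERIV_add d Cons)
  then show ?case by (simp add: e tv_def dt1_def algebra_simps)
qed

lemma S_deriv_x:
  assumes a0: "\<alpha> 0 > 0" and t: "t < T"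
  shows "deriv (\<lambda>z. S \<alpha> xb T y xs t z) = (\<lambda>z. S \<alpha> xb T y (dxs xs) t z)"
  by (rule ext, rule DERIV_imp_deriv, rule SX, rule a0, rule t)


definition smooth :: "(real \<Rightarrow> real) \<Rightarrow> bool" where
  "smooth f \<longleftrightarrow> (\<forall>k x. ((deriv ^^ k) f) differentiable (at x))"

lemma smooth_deriv:
  "smooth f \<Longrightarrow> ((deriv ^^ k) f has_real_derivative (deriv ^^ Suc k) f x) (at x)"
  unfolding smooth_def by (simp add: DERIV_deriv_iff_real_differentiable)

lemma smooth_cont: "smooth f \<Longrightarrow> continuous_on UNIV ((deriv ^^ k) f)"
  using smooth_deriv by (meson DERIV_isCont continuous_at_imp_continuous_on)

lemma smooth_lin_formula:
  assumes sm: "smooth f"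
  shows "(deriv ^^ k) (\<lambda>x. (x - c) * f x) = (\<lambda>x. (x - c) * (deriv ^^ k) f x + real k * (deriv ^^ (k - 1)) f x)"
proof (induction k)
  case 0
  then show ?case by simp
next
  case (Suc k)
  have d: "((\<lambda>x. (x - c) * (deriv ^^ k) f x + real k * (deriv ^^ (k - 1)) f x) has_real_derivative
     (x - c) * (deriv ^^ Suc k) f x + real (Suc k) * (deriv ^^ k) f x) (at x)" for x
  proof -
    have D1: "((\<lambda>x. (x - c) * (deriv ^^ k) f x + real k * (deriv ^^ (k - 1)) f x) has_real_derivative
      ((x - c) * (deriv ^^ Suc k) f x + 1 * (deriv ^^ k) f x) + real k * (deriv ^^ Suc (k - 1)) f x) (at x)"
      by (intro DERIV_add DERIV_cmult DERIV_mult' smooth_deriv[OF sm]) (auto intro!: derivative_eq_intros)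
    have E: "real k * (deriv ^^ Suc (k - 1)) f x = real k * (deriv ^^ k) f x"
      by (cases k) auto
    show ?thesis by (rule DERIV_cong[OF D1[unfolded E]]) (simp add: algebra_simps)
  qed
  have "(deriv ^^ Suc k) (\<lambda>x. (x - c) * f x) = deriv ((deriv ^^ k) (\<lambda>x. (x - c) * f x))" by simp
  also have "\<dots> = deriv (\<lambda>x. (x - c) * (deriv ^^ k) f x + real k * (deriv ^^ (k - 1)) f x)" using Suc by simp
  also have "\<dots> = (\<lambda>x. (x - c) * (deriv ^^ Suc k) f x + real (Suc k) * (deriv ^^ k) f x)"
    by (rule ext, rule DERIV_imp_deriv[OF d])
  finally show ?case by simp
qed

lemma smooth_lin: "smooth f \<Longrightarrow> smooth (\<lambda>x. (x - c) * f x)"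
  unfolding smooth_def[of "\<lambda>x. (x - c) * f x"]
proof (intro allI)
  fix k x assume sm: "smooth f"
  have "((\<lambda>x. (x - c) * (deriv ^^ k) f x + real k * (deriv ^^ (k - 1)) f x)) differentiable (at x)"
    using sm unfolding smooth_def by (intro derivative_intros) auto
  then show "(deriv ^^ k) (\<lambda>x. (x - c) * f x) differentiable at x"
    by (simp add: smooth_lin_formula[OF sm])
qed

lemma smooth_pow: "smooth f \<Longrightarrow> smooth (\<lambda>x. (x - c)^i * f x)"
proof (induction i)
  case 0 then show ?case by simp
next
  case (Suc i)
  have "smooth (\<lambda>x. (x - c) * ((x - c)^i * f x))" by (rule smooth_lin[OF Suc(1)[OF Suc(2)]])
  then show ?case by (simp add: mult.assoc)
qed

lemma smooth_deriv_smooth: "smooth f \<Longrightarrow> smooth (deriv f)"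
  unfolding smooth_def by (metis funpow_Suc_right o_apply)

lemma vanish_deriv:
  fixes f :: "real \<Rightarrow> real" and R x :: real
  assumes "\<And>x. R < \<bar>x\<bar> \<Longrightarrow> f x = 0" "R < \<bar>x\<bar>"
  shows "deriv f x = 0"
proof -
  have "((\<lambda>x. 0) has_real_derivative 0) (at x)" by simp
  moreover have "open {x::real. R < \<bar>x\<bar>}" by (intro open_Collect_less continuous_intros)
  ultimately have "(f has_real_derivative 0) (at x)"
    by (rule has_field_derivative_transform_within_open[of _ _ _ "{x. R < \<bar>x\<bar>}"])
       (use assms in auto)
  then show ?thesis by (rule DERIV_imp_deriv)
qed

lemma vanish_derivs:
  fixes f :: "real \<Rightarrow> real" and R x :: real
  assumes "\<And>x. R < \<bar>x\<bar> \<Longrightarrow> f x = 0" "R < \<bar>x\<bar>"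
  shows "(deriv ^^ k) f x = 0"
  using assms(2)
proof (induction k arbitrary: x)
  case 0 then show ?case using assms(1) by simp
next
  case (Suc k)
  then show ?case by (simp add: vanish_deriv[of R "(deriv ^^ k) f"])
qed


lemma cs_integrable:
  fixes h :: "real \<Rightarrow> real"
  assumes c: "continuous_on UNIV h" and z: "\<And>x. R < \<bar>x\<bar> \<Longrightarrow> h x = 0"
  shows "integrable lborel h"
proof -
  have e: "h = (\<lambda>x. indicator {-R..R} x *\<^sub>R h x)"
    using z by (auto simp: indicator_def fun_eq_iff) (metis abs_le_iff minus_le_iff not_less)+
  have "integrable lborel (\<lambda>x. indicator {-R..R} x *\<^sub>R h x)"
    by (rule borel_integrable_compact) (auto intro: continuous_on_subset[OF c])
  then show ?thesis using e by simp
qed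

lemma cs_integral:
  fixes h :: "real \<Rightarrow> real"
  assumes c: "continuous_on UNIV h" and z: "\<And>x. R < \<bar>x\<bar> \<Longrightarrow> h x = 0"
  shows "integral\<^sup>L lborel h = integral {-R..R} h"
proof -
  have i: "(h has_integral integral {-R..R} h) {-R..R}"
    by (rule integrable_integral, rule integrable_continuous_interval, rule continuous_on_subset[OF c]) auto
  have "(h has_integral integral {-R..R} h) UNIV"
    by (rule has_integral_on_superset[OF i]) (use z in \<open>auto simp: abs_le_iff\<close>)
  then have "integral UNIV h = integral {-R..R} h" by (rule integral_unique)
  then show ?thesis using integral_lborel[OF cs_integrable[OF c z]] by simp
qed

lemma ibp:
  fixes f f' g g' :: "real \<Rightarrow> real"
  assumes df: "\<And>x. (f has_real_derivative f' x) (at x)" and cf': "continuous_on UNIV f'"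
    and dg: "\<And>x. (g has_real_derivative g' x) (at x)" and cg': "continuous_on UNIV g'"
    and zg: "\<And>x. R < \<bar>x\<bar> \<Longrightarrow> g x = 0" and zg': "\<And>x. R < \<bar>x\<bar> \<Longrightarrow> g' x = 0"
    and R: "R \<ge> 0"
  shows "integrable lborel (\<lambda>x. f' x * g x)" "integrable lborel (\<lambda>x. f x * g' x)"
    "integral\<^sup>L lborel (\<lambda>x. f' x * g x) = - integral\<^sup>L lborel (\<lambda>x. f x * g' x)"
proof -
  have cf: "continuous_on UNIV f" using df by (meson DERIV_isCont continuous_at_imp_continuous_on)
  have cg: "continuous_on UNIV g" using dg by (meson DERIV_isCont continuous_at_imp_continuous_on)
  have c1: "continuous_on UNIV (\<lambda>x. f' x * g x)" by (intro continuous_intros cf' cg)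
  have c2: "continuous_on UNIV (\<lambda>x. f x * g' x)" by (intro continuous_intros cf cg')
  have z1: "\<And>x. R + 1 < \<bar>x\<bar> \<Longrightarrow> f' x * g x = 0" using zg by auto
  have z2: "\<And>x. R + 1 < \<bar>x\<bar> \<Longrightarrow> f x * g' x = 0" using zg' by auto
  show i1: "integrable lborel (\<lambda>x. f' x * g x)" by (rule cs_integrable[OF c1 z1])
  show i2: "integrable lborel (\<lambda>x. f x * g' x)" by (rule cs_integrable[OF c2 z2])
  have c3: "continuous_on UNIV (\<lambda>x. f' x * g x + f x * g' x)" by (intro continuous_intros c1 c2)
  have z3: "\<And>x. R + 1 < \<bar>x\<bar> \<Longrightarrow> f' x * g x + f x * g' x = 0"
  proof -
    fix x :: real assume "R + 1 < \<bar>x\<bar>"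
    then have A: "f' x * g x = 0" and B: "f x * g' x = 0" using z1 z2 by blast+
    show "f' x * g x + f x * g' x = 0" by (simp only: A B add_0)
  qed
  have ftc: "((\<lambda>x. f' x * g x + f x * g' x) has_integral (f (R+1) * g (R+1) - f (-(R+1)) * g (-(R+1)))) {-(R+1)..R+1}"
  proof (rule fundamental_theorem_of_calculus)
    show "- (R + 1) \<le> R + 1" using R by simp
    fix x
    have "((\<lambda>x. f x * g x) has_real_derivative f x * g' x + f' x * g x) (at x)"
      by (rule DERIV_mult'[OF df dg])
    then show "((\<lambda>x. f x * g x) has_vector_derivative f' x * g x + f x * g' x) (at x within {- (R + 1)..R + 1})"
      by (simp add: has_real_derivative_iff_has_vector_derivative[symmetric] add.commute has_field_derivative_at_within)
  qed
  have "g (R+1) = 0" "g (-(R+1)) = 0" using zg R by auto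
  then have "integral {-(R+1)..R+1} (\<lambda>x. f' x * g x + f x * g' x) = 0"
    using ftc by (simp add: integral_unique)
  then have "integral\<^sup>L lborel (\<lambda>x. f' x * g x + f x * g' x) = 0"
    using cs_integral[OF c3 z3] by simp
  then show "integral\<^sup>L lborel (\<lambda>x. f' x * g x) = - integral\<^sup>L lborel (\<lambda>x. f x * g' x)"
    using Bochner_Integration.integral_add[OF i1 i2] by simp
qed


lemma Dk_cont:
  assumes a0: "a0 > 0" and t: "t < T"
  shows "continuous_on UNIV (\<lambda>x. Dk a0 T y k t x)"
  using Dk_dx[OF a0 t] by (meson DERIV_isCont continuous_at_imp_continuous_on)

lemma Dk_ibp:
  assumes a0: "a0 > 0" and t: "t < T" and R: "R \<ge> 0"
  shows "smooth \<psi> \<Longrightarrow> (\<And>x. R < \<bar>x\<bar> \<Longrightarrow> \<psi> x = 0) \<Longrightarrow>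
    integrable lborel (\<lambda>x. Dk a0 T y k t x * \<psi> x) \<and>
    integral\<^sup>L lborel (\<lambda>x. Dk a0 T y k t x * \<psi> x) = (-1)^k * integral\<^sup>L lborel (\<lambda>x. G0 a0 t x T y * (deriv ^^ k) \<psi> x)"
proof (induction k arbitrary: \<psi>)
  case 0
  have c: "continuous_on UNIV (\<lambda>x. Dk a0 T y 0 t x * \<psi> x)"
    using Dk_cont[OF a0 t] smooth_cont[OF 0(1), of 0] by (intro continuous_intros) auto
  have z: "\<And>x. R < \<bar>x\<bar> \<Longrightarrow> Dk a0 T y 0 t x * \<psi> x = 0" using 0(2) by simp
  show ?case using cs_integrable[OF c z] by (simp add: Dk_def)
next
  case (Suc k)
  have sm': "smooth (deriv \<psi>)" by (rule smooth_deriv_smooth[OF Suc(2)])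
  have z': "\<And>x. R < \<bar>x\<bar> \<Longrightarrow> deriv \<psi> x = 0" by (rule vanish_deriv[where f=\<psi> and R=R, OF Suc(3)])
  have IH: "integrable lborel (\<lambda>x. Dk a0 T y k t x * deriv \<psi> x) \<and>
    integral\<^sup>L lborel (\<lambda>x. Dk a0 T y k t x * deriv \<psi> x) = (-1)^k * integral\<^sup>L lborel (\<lambda>x. G0 a0 t x T y * (deriv ^^ k) (deriv \<psi>) x)"
    by (rule Suc(1)[OF sm' z'])
  have dpsi: "\<And>x. (\<psi> has_real_derivative deriv \<psi> x) (at x)"
    using smooth_deriv[OF Suc(2), of 0] by simp
  have cpsi': "continuous_on UNIV (deriv \<psi>)" using smooth_cont[OF Suc(2), of 1] by simp
  note I = ibp[of "\<lambda>x. Dk a0 T y k t x" "\<lambda>x. Dk a0 T y (Suc k) t x" \<psi> "deriv \<psi>" R,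
     OF Dk_dx[OF a0 t] Dk_cont[OF a0 t] dpsi cpsi' Suc(3) z' R]
  have e: "(deriv ^^ k) (deriv \<psi>) = (deriv ^^ Suc k) \<psi>" by (simp add: funpow_Suc_right del: funpow.simps)
  show ?case using I IH e by simp
qed

lemma G0_normal:
  assumes a0: "a0 > 0" and t: "t < T"
  shows "G0 a0 t x T y = normal_density (y + a0 * (T - t) / 2) (sqrt (a0 * (T - t))) x"
proof -
  have p: "a0 * (T - t) > 0" using a0 t by simp
  have "(y - x + a0 * (T - t) / 2)^2 = (x - (y + a0 * (T - t) / 2))^2" by (simp add: power2_eq_square algebra_simps)
  then show ?thesis using p unfolding G0_def normal_density_def
    by (simp add: mult.assoc)
qed

lemma G0_bound:
  assumes a0: "a0 > 0" and t: "t < T" and c: "continuous_on UNIV ch"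
    and z: "\<And>x. R < \<bar>x\<bar> \<Longrightarrow> ch x = 0" and C: "\<And>x. \<bar>ch x\<bar> \<le> C"
  shows "\<bar>integral\<^sup>L lborel (\<lambda>x. G0 a0 t x T y * ch x)\<bar> \<le> C"
proof -
  let ?N = "normal_density (y + a0 * (T - t) / 2) (sqrt (a0 * (T - t)))"
  have cG: "continuous_on UNIV (\<lambda>x. G0 a0 t x T y)"
    using Dk_cont[OF a0 t, of y 0] by (simp add: Dk_def)
  have i1: "integrable lborel (\<lambda>x. G0 a0 t x T y * ch x)"
    by (rule cs_integrable[of _ R]) (use z in \<open>auto intro!: continuous_intros cG c\<close>)
  have i2: "integrable lborel (\<lambda>x. C * ?N x)" using a0 t by (auto intro!: integrable_mult_right integrable_normal_density)
  have "\<bar>integral\<^sup>L lborel (\<lambda>x. G0 a0 t x T y * ch x)\<bar> \<le> integral\<^sup>L lborel (\<lambda>x. C * ?N x)"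
  proof (rule integral_abs_bound_integral[OF i1 i2])
    fix x
    have "\<bar>G0 a0 t x T y * ch x\<bar> = ?N x * \<bar>ch x\<bar>" using G0_normal[OF a0 t] by (simp add: abs_mult)
    also have "\<dots> \<le> ?N x * C" by (intro mult_left_mono C) auto
    finally show "\<bar>G0 a0 t x T y * ch x\<bar> \<le> C * ?N x" by (simp add: mult.commute)
  qed
  also have "\<dots> = C" using a0 t by simp
  finally show ?thesis .
qed


lemma cont_bound:
  fixes ch :: "real \<Rightarrow> real"
  assumes c: "continuous_on UNIV ch" and z: "\<And>x. R < \<bar>x\<bar> \<Longrightarrow> ch x = 0"
  obtains C where "\<And>x. \<bar>ch x\<bar> \<le> C"
proof -
  have "compact (ch ` {-R..R})" by (rule compact_continuous_image) (auto intro: continuous_on_subset[OF c])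
  then have "bounded (ch ` {-R..R})" by (rule compact_imp_bounded)
  then obtain B where "\<forall>v\<in>ch ` {-R..R}. norm v \<le> B" unfolding bounded_iff by blast
  then have B: "\<And>x. x \<in> {-R..R} \<Longrightarrow> \<bar>ch x\<bar> \<le> B" by auto
  have "\<bar>ch x\<bar> \<le> \<bar>B\<bar>" for x
  proof (cases "x \<in> {-R..R}")
    case True then show ?thesis using B[OF True] by simp
  next
    case False then have "R < \<bar>x\<bar>" by auto
    then show ?thesis using z by simp
  qed
  then show ?thesis using that by blast
qed

lemma S_weak:
  assumes a0: "\<alpha> 0 > 0" and T: "T > 0" and sm: "smooth \<phi>" and z: "\<And>x. R < \<bar>x\<bar> \<Longrightarrow> \<phi> x = 0" and R: "R \<ge> 0"
  shows "(\<forall>(c,i,p,k)\<in>set xs. 1 \<le> p) \<Longrightarrow>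
    (\<forall>t<T. integrable lborel (\<lambda>x. S \<alpha> xb T y xs t x * \<phi> x)) \<and>
    ((\<lambda>t. integral\<^sup>L lborel (\<lambda>x. S \<alpha> xb T y xs t x * \<phi> x)) \<longlongrightarrow> 0) (at_left T)"
proof (induction xs)
  case Nil
  then show ?case by simp
next
  case (Cons e xs)
  obtain c i p k where e: "e = (c,i,p,k)" by (cases e) auto
  have p: "1 \<le> p" using Cons(2) e by auto
  have IH: "(\<forall>t<T. integrable lborel (\<lambda>x. S \<alpha> xb T y xs t x * \<phi> x)) \<and>
    ((\<lambda>t. integral\<^sup>L lborel (\<lambda>x. S \<alpha> xb T y xs t x * \<phi> x)) \<longlongrightarrow> 0) (at_left T)"
    using Cons by auto
  define \<psi> where "\<psi> = (\<lambda>x. (x - xb)^i * \<phi> x)"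
  have sp: "smooth \<psi>" unfolding \<psi>_def by (rule smooth_pow[OF sm])
  have zp: "\<And>x. R < \<bar>x\<bar> \<Longrightarrow> \<psi> x = 0" using z by (simp add: \<psi>_def)
  have cch: "continuous_on UNIV ((deriv ^^ k) \<psi>)" by (rule smooth_cont[OF sp])
  have zch: "\<And>x. R < \<bar>x\<bar> \<Longrightarrow> (deriv ^^ k) \<psi> x = 0" by (rule vanish_derivs[where f=\<psi> and R=R, OF zp])
  obtain C where C: "\<And>x. \<bar>(deriv ^^ k) \<psi> x\<bar> \<le> C" using cont_bound[OF cch zch] by blast
  have eq: "tv \<alpha> xb (T - t) (\<lambda>k. Dk (\<alpha> 0) T y k t x) e x * \<phi> x = c \<alpha> * (T - t)^p * (Dk (\<alpha> 0) T y k t x * \<psi> x)" for t x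
    by (simp add: e tv_def \<psi>_def)
  have ib: "integrable lborel (\<lambda>x. Dk (\<alpha> 0) T y k t x * \<psi> x) \<and>
    integral\<^sup>L lborel (\<lambda>x. Dk (\<alpha> 0) T y k t x * \<psi> x) = (-1)^k * integral\<^sup>L lborel (\<lambda>x. G0 (\<alpha> 0) t x T y * (deriv ^^ k) \<psi> x)"
    if "t < T" for t
    by (rule Dk_ibp[OF a0 that R sp zp])
  have i1: "integrable lborel (\<lambda>x. tv \<alpha> xb (T - t) (\<lambda>k. Dk (\<alpha> 0) T y k t x) e x * \<phi> x)" if "t < T" for t
    unfolding eq using ib[OF that] by (intro integrable_mult_right) auto
  have bnd: "\<bar>integral\<^sup>L lborel (\<lambda>x. tv \<alpha> xb (T - t) (\<lambda>k. Dk (\<alpha> 0) T y k t x) e x * \<phi> x)\<bar> \<le> \<bar>c \<alpha>\<bar> * (T - t)^p * C"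
    if "t < T" for t
  proof -
    have "integral\<^sup>L lborel (\<lambda>x. tv \<alpha> xb (T - t) (\<lambda>k. Dk (\<alpha> 0) T y k t x) e x * \<phi> x)
       = c \<alpha> * (T - t)^p * ((-1)^k * integral\<^sup>L lborel (\<lambda>x. G0 (\<alpha> 0) t x T y * (deriv ^^ k) \<psi> x))"
      unfolding eq using ib[OF that] by simp
    moreover have B: "\<bar>integral\<^sup>L lborel (\<lambda>x. G0 (\<alpha> 0) t x T y * (deriv ^^ k) \<psi> x)\<bar> \<le> C"
      by (rule G0_bound[OF a0 that cch zch C])
    moreover have P: "(T - t)^p \<ge> 0" using that by simp
    moreover have "\<bar>c \<alpha>\<bar> * (T - t)^p * \<bar>integral\<^sup>L lborel (\<lambda>x. G0 (\<alpha> 0) t x T y * (deriv ^^ k) \<psi> x)\<bar>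
       \<le> \<bar>c \<alpha>\<bar> * (T - t)^p * C"
      by (rule mult_left_mono[OF B]) (use P in simp)
    moreover have "\<bar>T - t\<bar> = T - t" using that by simp
    ultimately show ?thesis
      by (simp add: abs_mult power_abs)
  qed
  have l1: "((\<lambda>t. integral\<^sup>L lborel (\<lambda>x. tv \<alpha> xb (T - t) (\<lambda>k. Dk (\<alpha> 0) T y k t x) e x * \<phi> x)) \<longlongrightarrow> 0) (at_left T)"
  proof (rule Lim_null_comparison)
    show "\<forall>\<^sub>F t in at_left T. norm (integral\<^sup>L lborel (\<lambda>x. tv \<alpha> xb (T - t) (\<lambda>k. Dk (\<alpha> 0) T y k t x) e x * \<phi> x)) \<le> \<bar>c \<alpha>\<bar> * (T - t)^p * C"
      using eventually_at_left_real[OF T] by eventually_elim (use bnd in auto)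
    have "((\<lambda>t. \<bar>c \<alpha>\<bar> * (T - t)^p * C) \<longlongrightarrow> \<bar>c \<alpha>\<bar> * (T - T)^p * C) (at_left T)"
      by (intro tendsto_intros)
    moreover have "(0::real)^p = 0" using p by (simp add: zero_power)
    ultimately show "((\<lambda>t. \<bar>c \<alpha>\<bar> * (T - t)^p * C) \<longlongrightarrow> 0) (at_left T)" by simp
  qed
  have i2: "integrable lborel (\<lambda>x. S \<alpha> xb T y (e # xs) t x * \<phi> x)" if "t < T" for t
    using Bochner_Integration.integrable_add[OF i1[OF that] IH[THEN conjunct1, rule_format, OF that]]
    by (simp add: distrib_right)
  have "((\<lambda>t. integral\<^sup>L lborel (\<lambda>x. tv \<alpha> xb (T - t) (\<lambda>k. Dk (\<alpha> 0) T y k t x) e x * \<phi> x)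
     + integral\<^sup>L lborel (\<lambda>x. S \<alpha> xb T y xs t x * \<phi> x)) \<longlongrightarrow> 0 + 0) (at_left T)"
    by (intro tendsto_add l1 IH[THEN conjunct2])
  note lim = this
  have ev: "\<forall>\<^sub>F t in at_left T. integral\<^sup>L lborel (\<lambda>x. tv \<alpha> xb (T - t) (\<lambda>k. Dk (\<alpha> 0) T y k t x) e x * \<phi> x)
     + integral\<^sup>L lborel (\<lambda>x. S \<alpha> xb T y xs t x * \<phi> x) = integral\<^sup>L lborel (\<lambda>x. S \<alpha> xb T y (e # xs) t x * \<phi> x)"
      using eventually_at_left_real[OF T]
    proof eventually_elim
      case (elim t)
      then have t: "t < T" by simp
      show ?case using i1[OF t] IH t by (simp add: distrib_right Bochner_Integration.integral_add)
    qed
  have l2: "((\<lambda>t. integral\<^sup>L lborel (\<lambda>x. S \<alpha> xb T y (e # xs) t x * \<phi> x)) \<longlongrightarrow> 0) (at_left T)"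
    using Lim_transform_eventually[OF lim ev] by simp
  show ?case using i2 l2 by blast
qed


definition coefG :: "nat \<Rightarrow> nat \<Rightarrow> nat \<Rightarrow> nat \<Rightarrow> (nat \<Rightarrow> real) \<Rightarrow> real" where
  "coefG m i j k = (\<lambda>\<alpha>. sum_list (map (\<lambda>(c',i',p',k'). if i' = i \<and> 2 * p' = j \<and> k' = k then c' \<alpha> else 0) (Gl m)))"

lemma poly_sum_list_if:
  "allp n xs \<Longrightarrow> (\<lambda>\<alpha>. sum_list (map (\<lambda>(c',i',p',k'). if P i' p' k' then c' \<alpha> else 0) xs)) \<in> poly_fun n"
proof (induction xs)
  case Nil
  then show ?case using poly_fun.const[of 0 n] by simp
next
  case (Cons e xs)
  obtain c i p k where e: "e = (c,i,p,k)" by (cases e) auto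
  have A: "(\<lambda>\<alpha>. if P i p k then c \<alpha> else 0) \<in> poly_fun n"
    using Cons(2) e poly_fun.const[of 0 n] by (cases "P i p k") auto
  have B: "(\<lambda>\<alpha>. sum_list (map (\<lambda>(c',i',p',k'). if P i' p' k' then c' \<alpha> else 0) xs)) \<in> poly_fun n"
    using Cons by simp
  show ?case using poly_fun.add[OF A B] by (simp add: e)
qed

lemma coefG_poly: "coefG m i j k \<in> poly_fun m"
  unfolding coefG_def by (rule poly_sum_list_if[OF allp_Gl])

lemma regroup:
  fixes key :: "'e \<Rightarrow> 'k" and F :: "'e \<Rightarrow> real"
  assumes "finite K" "\<forall>e\<in>set xs. key e \<in> K"
  shows "(\<Sum>\<kappa>\<in>K. sum_list (map (\<lambda>e. if key e = \<kappa> then F e else 0) xs) * g \<kappa>) = sum_list (map (\<lambda>e. F e * g (key e)) xs)"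
  using assms(2)
proof (induction xs)
  case Nil then show ?case by simp
next
  case (Cons e xs)
  have "(\<Sum>\<kappa>\<in>K. sum_list (map (\<lambda>e. if key e = \<kappa> then F e else 0) (e # xs)) * g \<kappa>)
     = (\<Sum>\<kappa>\<in>K. (if key e = \<kappa> then F e * g \<kappa> else 0)) + (\<Sum>\<kappa>\<in>K. sum_list (map (\<lambda>e. if key e = \<kappa> then F e else 0) xs) * g \<kappa>)"
  proof -
    have "(if key e = \<kappa> then F e else 0) * g \<kappa> = (if key e = \<kappa> then F e * g \<kappa> else 0)" for \<kappa> by simp
    then show ?thesis by (simp add: distrib_right sum.distrib del: mult_if_delta)
  qed
  also have "(\<Sum>\<kappa>\<in>K. (if key e = \<kappa> then F e * g \<kappa> else 0)) = F e * g (key e)"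
    using Cons(2) assms(1) by (simp add: sum.delta)
  finally show ?case using Cons by simp
qed

lemma finite_idx: "finite (idx n)"
proof -
  have "idx n \<subseteq> {..n} \<times> {..n * (n + 3)} \<times> {..n * (n + 5) div 2}" by (auto simp: idx_def)
  then show ?thesis by (rule finite_subset) auto
qed

lemma G_eq:
  assumes t: "t \<le> T"
  shows "Gform (\<lambda>i j k. coefG m i j k \<alpha>) m (\<alpha> 0) xb T y t x = S \<alpha> xb T y (Gl m) t x"
proof -
  let ?key = "\<lambda>e :: tm. (case e of (c,i,p,k) \<Rightarrow> (i, 2 * p, k))"
  let ?F = "\<lambda>e :: tm. (case e of (c,i,p,k) \<Rightarrow> c \<alpha>)"
  let ?g = "\<lambda>(i,j,k). (x - xb)^i * (sqrt (T - t))^j * (deriv ^^ k) (\<lambda>z. G0 (\<alpha> 0) t z T y) x"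
  have keys: "\<forall>e\<in>set (Gl m). ?key e \<in> idx m"
  proof
    fix e assume e: "e \<in> set (Gl m)"
    obtain c i p k where ee: "e = (c,i,p,k)" by (cases e) auto
    from Gl_bounds[of c i p k m] e ee show "?key e \<in> idx m" by (auto simp: idx_def)
  qed
  have "Gform (\<lambda>i j k. coefG m i j k \<alpha>) m (\<alpha> 0) xb T y t x =
    (\<Sum>\<kappa>\<in>idx m. sum_list (map (\<lambda>e. if ?key e = \<kappa> then ?F e else 0) (Gl m)) * ?g \<kappa>)"
  proof -
    have cf: "coefG m i j k \<alpha> = sum_list (map (\<lambda>e. if ?key e = (i,j,k) then ?F e else 0) (Gl m))" for i j k
      unfolding coefG_def
      by (intro arg_cong[where f=sum_list] map_cong refl) (auto split: prod.splits)
    show ?thesis unfolding Gform_def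
      by (rule sum.cong) (auto simp: cf)
  qed
  also have "\<dots> = sum_list (map (\<lambda>e. ?F e * ?g (?key e)) (Gl m))"
    by (rule regroup[OF finite_idx keys])
  also have "\<dots> = S \<alpha> xb T y (Gl m) t x"
  proof -
    have "?F e * ?g (?key e) = tv \<alpha> xb (T - t) (\<lambda>k. Dk (\<alpha> 0) T y k t x) e x" for e
    proof -
      obtain c i p k where ee: "e = (c,i,p,k)" by (cases e) auto
      have "(sqrt (T - t))^(2 * p) = (T - t)^p" using t by (simp add: power_mult)
      then show ?thesis by (simp add: ee tv_def Dk_def)
    qed
    then show ?thesis by (simp add: S_def sev_def)
  qed
  finally show ?thesis .
qed


lemma D2d: "(f has_real_derivative D) (at x) \<Longrightarrow> f differentiable (at x)"
  by (auto simp: real_differentiable_def)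

lemma Lxx_S:
  assumes a0: "\<alpha> 0 > 0" and t: "t < T" and u: "\<And>w. u t w = S \<alpha> xb T y xs t w"
  shows "Lxx u t x = S \<alpha> xb T y (Lxs xs) t x"
proof -
  have e: "(\<lambda>w. u t w) = (\<lambda>w. S \<alpha> xb T y xs t w)" using u by auto
  show ?thesis
    unfolding Lxx_def e S_deriv_x[where \<alpha>=\<alpha> and t=t and T=T, OF a0 t]
    by (simp add: Lxs_def S_def)
qed

lemma cauchy_m:
  assumes a0: "\<alpha> 0 > 0" and T: "T > 0" and m: "m \<ge> 1"
  shows "cauchy_sol (\<alpha> 0) T (Gform (\<lambda>i j k. coefG m i j k \<alpha>) m (\<alpha> 0) xb T y)
    (\<lambda>t x. - (\<Sum>h = 1..m. \<alpha> h * (x - xb)^h * Lxx (Gform (\<lambda>i j k. coefG (m - h) i j k \<alpha>) (m - h) (\<alpha> 0) xb T y) t x))"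
  unfolding cauchy_sol_def
proof (intro conjI ballI allI impI)
  let ?U = "\<lambda>m. Gform (\<lambda>i j k. coefG m i j k \<alpha>) m (\<alpha> 0) xb T y"
  have U: "\<And>m t x. t \<le> T \<Longrightarrow> ?U m t x = S \<alpha> xb T y (Gl m) t x" by (rule G_eq)
  fix t x assume tt: "t \<in> {0<..<T}"
  then have t: "t < T" by simp
  have ex: "(\<lambda>z. ?U m t z) = (\<lambda>z. S \<alpha> xb T y (Gl m) t z)" using U t by auto
  have dt: "((\<lambda>s. ?U m s x) has_real_derivative S \<alpha> xb T y (dts (Gl m)) t x) (at t)"
    by (rule has_field_derivative_transform_within_open[OF ST[where \<alpha>=\<alpha> and t=t and T=T, OF a0 t], of "{..<T}"]) (use t U in auto)
  show "(\<lambda>s. ?U m s x) differentiable at t" by (rule D2d[OF dt])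
  show "(\<lambda>z. ?U m t z) differentiable at x" unfolding ex by (rule D2d[OF SX[where \<alpha>=\<alpha> and t=t and T=T, OF a0 t]])
  show "(\<lambda>z. deriv (\<lambda>w. ?U m t w) z) differentiable at x"
    unfolding ex S_deriv_x[where \<alpha>=\<alpha> and t=t and T=T, OF a0 t] by (rule D2d[OF SX[where \<alpha>=\<alpha> and t=t and T=T, OF a0 t]])
  have L: "Lxx (?U m) t x = S \<alpha> xb T y (Lxs (Gl m)) t x"
    by (rule Lxx_S[where \<alpha>=\<alpha> and t=t and T=T, OF a0 t]) (use U t in auto)
  have Lh: "Lxx (?U (m - h)) t x = S \<alpha> xb T y (Lxs (Gl (m - h))) t x" for h
    by (rule Lxx_S[where \<alpha>=\<alpha> and t=t and T=T, OF a0 t]) (use U t in auto)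
  have "\<alpha> 0 / 2 * Lxx (?U m) t x + deriv (\<lambda>s. ?U m s x) t = S \<alpha> xb T y (L0s (Gl m)) t x"
    unfolding L DERIV_imp_deriv[OF dt] by (simp add: S_def L0s_def)
  also have "\<dots> = (\<Sum>h = 1..m. - \<alpha> h * (x - xb)^h * S \<alpha> xb T y (Lxs (Gl (m - h))) t x)"
    unfolding S_def by (rule Gl_L0[OF m])
  also have "\<dots> = - (\<Sum>h = 1..m. \<alpha> h * (x - xb)^h * Lxx (?U (m - h)) t x)"
    by (simp add: Lh sum_negf[symmetric])
  finally show "\<alpha> 0 / 2 * Lxx (?U m) t x + deriv (\<lambda>s. ?U m s x) t =
     - (\<Sum>h = 1..m. \<alpha> h * (x - xb)^h * Lxx (?U (m - h)) t x)" .
next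
  let ?U = "\<lambda>m. Gform (\<lambda>i j k. coefG m i j k \<alpha>) m (\<alpha> 0) xb T y"
  have U: "\<And>m t x. t \<le> T \<Longrightarrow> ?U m t x = S \<alpha> xb T y (Gl m) t x" by (rule G_eq)
  fix \<phi> assume tf: "test_function \<phi>"
  then have sm: "smooth \<phi>" by (simp add: test_function_def smooth_def)
  from tf have "bounded {x. \<phi> x \<noteq> 0}" by (simp add: test_function_def)
  then obtain R0 where R0: "\<forall>x\<in>{x. \<phi> x \<noteq> 0}. norm x \<le> R0" unfolding bounded_iff by blast
  define R where "R = \<bar>R0\<bar>"
  have R: "R \<ge> 0" by (simp add: R_def)
  have z: "\<And>x. R < \<bar>x\<bar> \<Longrightarrow> \<phi> x = 0" using R0 by (force simp: R_def)
  have pos: "\<forall>(c,i,p,k)\<in>set (Gl m). 1 \<le> p" using Gl_bounds m by fastforce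
  note W = S_weak[where \<alpha>=\<alpha> and T=T and \<phi>=\<phi> and R=R and xs="Gl m" and xb=xb and y=y, OF a0 T sm z R pos]
  show "integrable lborel (\<lambda>x. ?U m t x * \<phi> x)" if "t \<in> {0<..<T}" for t
  proof -
    have "integrable lborel (\<lambda>x. S \<alpha> xb T y (Gl m) t x * \<phi> x)" using W that by auto
    moreover have "(\<lambda>x. S \<alpha> xb T y (Gl m) t x * \<phi> x) = (\<lambda>x. ?U m t x * \<phi> x)" using U that by auto
    ultimately show ?thesis by simp
  qed
  have ev: "\<forall>\<^sub>F t in at_left T. integral\<^sup>L lborel (\<lambda>x. S \<alpha> xb T y (Gl m) t x * \<phi> x) = integral\<^sup>L lborel (\<lambda>x. ?U m t x * \<phi> x)"
    using eventually_at_left_real[OF T] by eventually_elim (use U in auto)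
  show "((\<lambda>t. integral\<^sup>L lborel (\<lambda>x. ?U m t x * \<phi> x)) \<longlongrightarrow> 0) (at_left T)"
    by (rule Lim_transform_eventually[OF W[THEN conjunct2] ev])
qed


theorem mainTheorem13:
  fixes N n :: nat
  assumes "n \<le> N"
  shows "\<exists>c :: nat \<Rightarrow> nat \<Rightarrow> nat \<Rightarrow> nat \<Rightarrow> ((nat \<Rightarrow> real) \<Rightarrow> real).
    (\<forall>m\<le>n. \<forall>i j k. c m i j k \<in> poly_fun m) \<and>
    (\<forall>(a :: real \<Rightarrow> real) (xbar :: real) (T :: real) (y :: real).
       assumption_A N a \<and> 0 < a xbar \<and> 0 < T \<longrightarrow>
       (let \<alpha> = alpha a xbar;
            G = (\<lambda>m. Gform (\<lambda>i j k. c m i j k \<alpha>) m (\<alpha> 0) xbar T y)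
        in (\<forall>t\<in>{0<..<T}. \<forall>x. G 0 t x = G0 (\<alpha> 0) t x T y) \<and>
           (\<forall>m\<in>{1..n}. cauchy_sol (\<alpha> 0) T (G m)
              (\<lambda>t x. - (\<Sum>h = 1..m. \<alpha> h * (x - xbar)^h * Lxx (G (m - h)) t x)))))"
proof (rule exI[of _ "\<lambda>m i j k. coefG m i j k"], rule conjI)
  show "\<forall>m\<le>n. \<forall>i j k. coefG m i j k \<in> poly_fun m" by (simp add: coefG_poly)
next
  show "\<forall>(a :: real \<Rightarrow> real) (xbar :: real) (T :: real) (y :: real).
       assumption_A N a \<and> 0 < a xbar \<and> 0 < T \<longrightarrow>
       (let \<alpha> = alpha a xbar;
            G = (\<lambda>m. Gform (\<lambda>i j k. coefG m i j k \<alpha>) m (\<alpha> 0) xbar T y)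
        in (\<forall>t\<in>{0<..<T}. \<forall>x. G 0 t x = G0 (\<alpha> 0) t x T y) \<and>
           (\<forall>m\<in>{1..n}. cauchy_sol (\<alpha> 0) T (G m)
              (\<lambda>t x. - (\<Sum>h = 1..m. \<alpha> h * (x - xbar)^h * Lxx (G (m - h)) t x))))"
  proof (intro allI impI)
  fix a :: "real \<Rightarrow> real" and xbar T y :: real
  assume h: "assumption_A N a \<and> 0 < a xbar \<and> 0 < T"
  define \<alpha> where "\<alpha> = alpha a xbar"
  have a0: "\<alpha> 0 > 0" using h by (simp add: \<alpha>_def alpha_def)
  have T: "T > 0" using h by simp
  have g0: "Gform (\<lambda>i j k. coefG 0 i j k \<alpha>) 0 (\<alpha> 0) xbar T y t x = G0 (\<alpha> 0) t x T y" if "t \<in> {0<..<T}" for t x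
  proof -
    have "Gform (\<lambda>i j k. coefG 0 i j k \<alpha>) 0 (\<alpha> 0) xbar T y t x = S \<alpha> xbar T y (Gl 0) t x"
      by (rule G_eq) (use that in auto)
    also have "\<dots> = G0 (\<alpha> 0) t x T y" by (simp add: Gl_0 tv_def Dk_def)
    finally show ?thesis .
  qed
  have cs: "cauchy_sol (\<alpha> 0) T (Gform (\<lambda>i j k. coefG m i j k \<alpha>) m (\<alpha> 0) xbar T y)
    (\<lambda>t x. - (\<Sum>h = 1..m. \<alpha> h * (x - xbar)^h * Lxx (Gform (\<lambda>i j k. coefG (m - h) i j k \<alpha>) (m - h) (\<alpha> 0) xbar T y) t x))"
    if "m \<in> {1..n}" for m
    by (rule cauchy_m[where \<alpha>=\<alpha> and T=T, OF a0 T]) (use that in auto)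
  show "let \<alpha> = alpha a xbar;
            G = (\<lambda>m. Gform (\<lambda>i j k. coefG m i j k \<alpha>) m (\<alpha> 0) xbar T y)
        in (\<forall>t\<in>{0<..<T}. \<forall>x. G 0 t x = G0 (\<alpha> 0) t x T y) \<and>
           (\<forall>m\<in>{1..n}. cauchy_sol (\<alpha> 0) T (G m)
              (\<lambda>t x. - (\<Sum>h = 1..m. \<alpha> h * (x - xbar)^h * Lxx (G (m - h)) t x)))"
    unfolding Let_def \<alpha>_def[symmetric] using g0 cs by blast
  qed
qed

end
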